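(* Let $T_{26}=\mathbf{e}^1_1\otimes(\mathbf{e}^2_1\otimes\mathbf{e}^3_1+\mathbf{e}^2_2\otimes\mathbf{e}^3_3+\mathbf{e}^2_3\otimes\mathbf{e}^3_5)+\mathbf{e}^1_2\otimes(\mathbf{e}^2_1\otimes\mathbf{e}^3_2+\mathbf{e}^2_2\otimes\mathbf{e}^3_4+\mathbf{e}^2_3\otimes\mathbf{e}^3_6)\in\mathbb{C}^2\otimes\mathbb{C}^3\otimes\mathbb{C}^6$ and $g(\mathbf{x},\mathbf{y},\mathbf{z})=x_1y_1z_1+x_2y_1z_2+x_1y_2z_3+x_2y_2z_4+x_1y_3z_5+x_2y_3z_6$. Let $T\in\mathbb{C}^2\otimes\mathbb{C}^3\otimes\mathbb{C}^6$ and $(A,B,C)\in\mathrm{GL}_2\times\mathrm{GL}_3\times\mathrm{GL}_6$ with $(A,B,C)\cdot T=T_{26}$. Then a rank-one tensor $\mathbf{a}\otimes\mathbf{b}\otimes\mathbf{c}$ lies in the forbidden locus of $T$ if and only if $g(A\mathbf{a},B\mathbf{b},C\mathbf{c})=0$ (equivalently $\langle (A^T\otimes B^T\otimes C^T)\cdot T_{26}^*,\mathbf{a}\otimes\mathbf{b}\otimes\mathbf{c}\rangle=0$, where $T_{26}^*$ is $T_{26}$ written in the dual basis).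
   Context: $\mathbf{e}^i_j$ is the $j$-th standard basis vector of the $i$-th factor. The group acts by $(A,B,C)\cdot(\mathbf{a}\otimes\mathbf{b}\otimes\mathbf{c})=A\mathbf{a}\otimes B\mathbf{b}\otimes C\mathbf{c}$, extended linearly. The rank of a tensor is the minimal number of rank-one tensors summing to it; $P$ is in the forbidden locus of $T$ if $\mathrm{rk}(T-\lambda P)\ge\mathrm{rk}(T)$ for all $\lambda\in\mathbb{C}$. (Here $\mathrm{rk}(T)=6$.) *)

theory Defs
  imports "HOL-Analysis.Analysis"
begin

text \<open>The standard basis vector e_j (j = 1..n) of C^n is axis (j-1) 1, where the index type
  is the numeral type n with elements 0,...,n-1.\<close>

type_synonym ('a,'b,'c) tensor = "'a \<Rightarrow> 'b \<Rightarrow> 'c \<Rightarrow> complex"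

definition outer :: "complex^'a \<Rightarrow> complex^'b \<Rightarrow> complex^'c \<Rightarrow> ('a,'b,'c) tensor" where
  "outer a b c = (\<lambda>i j k. a $ i * b $ j * c $ k)"

definition tensor_rank :: "('a::finite,'b::finite,'c::finite) tensor \<Rightarrow> nat" where
  "tensor_rank T = (LEAST r. \<exists>a b c. T = (\<lambda>i j k. \<Sum>l<r. outer (a l) (b l) (c l) i j k))"

definition tensor_act ::
  "complex^'a^'a \<Rightarrow> complex^'b^'b \<Rightarrow> complex^'c^'c \<Rightarrow> ('a::finite,'b::finite,'c::finite) tensor
   \<Rightarrow> ('a,'b,'c) tensor" where
  "tensor_act A B C T = (\<lambda>i j k. \<Sum>i'\<in>UNIV. \<Sum>j'\<in>UNIV. \<Sum>k'\<in>UNIV.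
      A $ i $ i' * B $ j $ j' * C $ k $ k' * T i' j' k')"

definition forbidden_locus :: "('a::finite,'b::finite,'c::finite) tensor \<Rightarrow> ('a,'b,'c) tensor set" where
  "forbidden_locus T = {P. \<forall>t::complex. tensor_rank (\<lambda>i j k. T i j k - t * P i j k) \<ge> tensor_rank T}"

definition e :: "'n::finite \<Rightarrow> complex^'n" where
  "e i = axis i 1"

definition T26 :: "(2,3,6) tensor" where
  "T26 = (\<lambda>i j k. outer (e 0) (e 0) (e 0) i j k + outer (e 0) (e 1) (e 2) i j k
       + outer (e 0) (e 2) (e 4) i j k + outer (e 1) (e 0) (e 1) i j k
       + outer (e 1) (e 1) (e 3) i j k + outer (e 1) (e 2) (e 5) i j k)"

definition g26 :: "complex^2 \<Rightarrow> complex^3 \<Rightarrow> complex^6 \<Rightarrow> complex" where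
  "g26 x y z = x$0*y$0*z$0 + x$1*y$0*z$1 + x$0*y$1*z$2 + x$1*y$1*z$3 + x$0*y$2*z$4 + x$1*y$2*z$5"

end

theory Submission
  imports Defs
begin


definition enc :: "2 \<Rightarrow> 3 \<Rightarrow> 6" where
 "enc i j = (if i = 0 then (if j = 0 then 0 else if j = 1 then 2 else 4)
             else (if j = 0 then 1 else if j = 1 then 3 else 5))"

lemma encv: "enc 0 0 = 0" "enc 1 0 = 1" "enc 0 1 = 2" "enc 1 1 = 3" "enc 0 2 = 4" "enc 1 2 = 5"
  by (simp_all add: enc_def)

lemma U2: "(UNIV::2 set) = {0,1}" using UNIV_2 by auto
lemma U3: "(UNIV::3 set) = {0,1,2}" using UNIV_3 by auto
lemma U6: "(UNIV::6 set) = {0,1,2,3,4,5}"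
proof -
  have "card {0,1,2,3,4,5::6} = 6" by simp
  moreover have "CARD(6) = 6" by simp
  ultimately have "{0,1,2,3,4,5::6} = UNIV" by (intro card_subset_eq) auto
  then show ?thesis by simp
qed

lemma c2: "(i::2) = 0 \<or> i = 1" using U2 by auto
lemma c3: "(j::3) = 0 \<or> j = 1 \<or> j = 2" using U3 by auto
lemma c6: "(k::6) = 0 \<or> k = 1 \<or> k = 2 \<or> k = 3 \<or> k = 4 \<or> k = 5" using U6 by auto

lemma t2: "(2::2) = 0" by simp
lemma t3: "(3::3) = 0" by simp
lemma s2: "sum f (UNIV::2 set) = f 0 + f 1" using sum_2[of f] unfolding t2 by (simp only: add.commute)
lemma s3: "sum f (UNIV::3 set) = f 0 + f 1 + f 2" using sum_3[of f] unfolding t3 by (simp only: add_ac)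

lemma T26_eq: "T26 i j k = (if k = enc i j then 1 else 0)"
  using c2[of i] c3[of j]
  by (elim disjE) (simp_all add: T26_def outer_def e_def axis_def enc_def)

lemma g26_eq: "g26 x y z = (\<Sum>i\<in>UNIV. \<Sum>j\<in>UNIV. x$i * z$(enc i j) * y$j)"
  unfolding s2 s3 encv g26_def by (simp only: mult_ac add_ac)

lemma enc_sum: "(\<Sum>i\<in>UNIV. \<Sum>j\<in>UNIV. (if k = enc i j then (z::complex^6) $ (enc i j) else 0)) = z $ k"
  unfolding s2 s3 encv using c6[of k] by (elim disjE) simp_all

lemma enc_surj: "\<exists>i j. k = enc i j"
  using c6[of k] encv by (elim disjE) (metis)+


lemma sum_decomp:
  fixes a :: "'p \<Rightarrow> complex^'a::finite" and b :: "'p \<Rightarrow> complex^'b::finite"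
    and c :: "'p \<Rightarrow> complex^'c::finite"
  assumes "finite S"
  shows "\<exists>a' b' c'. (\<lambda>i j k. \<Sum>p\<in>S. outer (a p) (b p) (c p) i j k)
     = (\<lambda>i j k. \<Sum>l<card S. outer (a' l) (b' l) (c' l) i j k)"
proof -
  obtain h where h: "bij_betw h {0..<card S} S" using ex_bij_betw_nat_finite assms by blast
  have "(\<lambda>i j k. \<Sum>p\<in>S. outer (a p) (b p) (c p) i j k)
     = (\<lambda>i j k. \<Sum>l<card S. outer (a (h l)) (b (h l)) (c (h l)) i j k)"
  proof (intro ext)
    fix i j k
    show "(\<Sum>p\<in>S. outer (a p) (b p) (c p) i j k) = (\<Sum>l<card S. outer (a (h l)) (b (h l)) (c (h l)) i j k)"
      using sum.reindex_bij_betw[OF h, of "\<lambda>p. outer (a p) (b p) (c p) i j k"]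
      by (simp add: lessThan_atLeast0)
  qed
  then show ?thesis
    by (intro exI[of _ "\<lambda>l. a (h l)"] exI[of _ "\<lambda>l. b (h l)"] exI[of _ "\<lambda>l. c (h l)"])
qed

lemma rank_le_sum:
  fixes a :: "'p \<Rightarrow> complex^'a::finite" and b :: "'p \<Rightarrow> complex^'b::finite"
    and c :: "'p \<Rightarrow> complex^'c::finite"
  assumes "finite S"
  shows "tensor_rank (\<lambda>i j k. \<Sum>p\<in>S. outer (a p) (b p) (c p) i j k) \<le> card S"
  unfolding tensor_rank_def by (rule Least_le, rule sum_decomp[OF assms])

lemma rank_exists:
  fixes T :: "('a::finite,'b::finite,'c::finite) tensor"
  shows "\<exists>a b c. T = (\<lambda>i j k. \<Sum>l<tensor_rank T. outer (a l) (b l) (c l) i j k)"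
proof -
  let ?F = "\<lambda>i j k. \<Sum>p\<in>(UNIV::('a\<times>'b\<times>'c) set). outer (axis (fst p) 1) (axis (fst (snd p)) 1)
          (T (fst p) (fst (snd p)) (snd (snd p)) *s axis (snd (snd p)) 1) i j k"
  have "T = ?F"
  proof (intro ext)
    fix i j k
    have "?F i j k = (\<Sum>p\<in>(UNIV::('a\<times>'b\<times>'c) set). if p = (i,j,k) then T i j k else 0)"
      by (intro sum.cong refl) (auto simp: outer_def axis_def prod_eq_iff)
    also have "\<dots> = T i j k" by simp
    finally show "T i j k = ?F i j k" by simp
  qed
 have fin: "finite (UNIV::('a\<times>'b\<times>'c) set)" by simp
 obtain a' b' c' where "?F = (\<lambda>i j k. \<Sum>l<card (UNIV::('a\<times>'b\<times>'c) set). outer (a' l) (b' l) (c' l) i j k)"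
    using sum_decomp[OF fin, of "\<lambda>p. axis (fst p) 1" "\<lambda>p. axis (fst (snd p)) 1"
       "\<lambda>p. T (fst p) (fst (snd p)) (snd (snd p)) *s axis (snd (snd p)) 1"] by blast
 with \<open>T = ?F\<close> have eq: "T = (\<lambda>i j k. \<Sum>l<card (UNIV::('a\<times>'b\<times>'c) set). outer (a' l) (b' l) (c' l) i j k)"
    by simp
 have "\<exists>(r::nat) a b c. T = (\<lambda>i j k. \<Sum>l<r. outer (a l) (b l) (c l) i j k)"
   by (rule exI, rule exI, rule exI, rule exI, rule eq)
  then show ?thesis unfolding tensor_rank_def by (rule LeastI_ex)
qed

lemma triple_prod:
  "(\<Sum>x\<in>X. f x) * (\<Sum>y\<in>Y. g y) * (\<Sum>z\<in>Z. h z) = (\<Sum>x\<in>X. \<Sum>y\<in>Y. \<Sum>z\<in>Z. f x * g y * (h z::complex))"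
proof -
  have "(\<Sum>x\<in>X. \<Sum>y\<in>Y. \<Sum>z\<in>Z. f x * g y * h z) = (\<Sum>x\<in>X. f x * (\<Sum>y\<in>Y. g y * (\<Sum>z\<in>Z. h z)))"
    by (simp add: sum_distrib_left mult.assoc)
  also have "\<dots> = (\<Sum>x\<in>X. f x) * (\<Sum>y\<in>Y. g y) * (\<Sum>z\<in>Z. h z)"
    by (simp add: sum_distrib_right mult.assoc)
  finally show ?thesis by simp
qed

lemma sum3: "(\<Sum>p\<in>(UNIV::('a::finite\<times>'b::finite\<times>'c::finite) set). f p) = (\<Sum>x\<in>UNIV. \<Sum>y\<in>UNIV. \<Sum>z\<in>UNIV. f (x,y,z))"
  by (simp add: UNIV_Times_UNIV[symmetric] sum.cartesian_product' del: UNIV_Times_UNIV)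

lemma act_alt: "tensor_act A B C X i j k =
   (\<Sum>p\<in>UNIV. A$i$(fst p) * B$j$(fst (snd p)) * C$k$(snd (snd p)) * X (fst p) (fst (snd p)) (snd (snd p)))"
  unfolding tensor_act_def sum3 by simp

lemma act_outer: "tensor_act A B C (outer a b c) = outer (A *v a) (B *v b) (C *v c)"
proof (intro ext)
  fix i j k
  show "tensor_act A B C (outer a b c) i j k = outer (A *v a) (B *v b) (C *v c) i j k"
    unfolding tensor_act_def outer_def matrix_vector_mult_def vec_lambda_beta triple_prod
    by (simp add: mult_ac)
qed

lemma act_sum: "tensor_act A B C (\<lambda>i j k. \<Sum>l\<in>L. X l i j k)
   = (\<lambda>i j k. \<Sum>l\<in>L. tensor_act A B C (X l) i j k)"
  unfolding act_alt
  by (simp add: sum_distrib_left sum.swap[of _ UNIV L])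

lemma act_lin: "tensor_act A B C (\<lambda>i j k. X i j k - t * Y i j k)
   = (\<lambda>i j k. tensor_act A B C X i j k - t * tensor_act A B C Y i j k)"
  unfolding act_alt
  by (simp add: right_diff_distrib sum_subtractf sum_distrib_left mult_ac)

lemma rank_act_le: "tensor_rank (tensor_act A B C X) \<le> tensor_rank X"
proof -
  obtain a b c where X: "X = (\<lambda>i j k. \<Sum>l<tensor_rank X. outer (a l) (b l) (c l) i j k)"
    using rank_exists by blast
  have "tensor_act A B C X = (\<lambda>i j k. \<Sum>l<tensor_rank X. outer (A *v a l) (B *v b l) (C *v c l) i j k)"
    by (subst X, subst act_sum) (simp add: act_outer)
  then show ?thesis using rank_le_sum[of "{..<tensor_rank X}"] by simp
qed

lemma act_comp: "tensor_act A' B' C' (tensor_act A B C X) = tensor_act (A' ** A) (B' ** B) (C' ** C) X"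
proof (intro ext)
  fix i j k
  have "tensor_act A' B' C' (tensor_act A B C X) i j k =
    (\<Sum>p\<in>UNIV. \<Sum>q\<in>UNIV. A'$i$(fst p) * B'$j$(fst (snd p)) * C'$k$(snd (snd p)) *
       (A$(fst p)$(fst q) * B$(fst (snd p))$(fst (snd q)) * C$(snd (snd p))$(snd (snd q)) * X (fst q) (fst (snd q)) (snd (snd q))))"
    unfolding act_alt by (simp add: sum_distrib_left)
  also have "\<dots> = (\<Sum>q\<in>UNIV. \<Sum>p\<in>UNIV. (A'$i$(fst p) * A$(fst p)$(fst q)) * (B'$j$(fst (snd p)) * B$(fst (snd p))$(fst (snd q)))
       * (C'$k$(snd (snd p)) * C$(snd (snd p))$(snd (snd q))) * X (fst q) (fst (snd q)) (snd (snd q)))"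
    by (subst sum.swap) (simp add: mult_ac)
  also have "\<dots> = (\<Sum>q\<in>UNIV. (\<Sum>p\<in>UNIV. (A'$i$(fst p) * A$(fst p)$(fst q)) * (B'$j$(fst (snd p)) * B$(fst (snd p))$(fst (snd q)))
       * (C'$k$(snd (snd p)) * C$(snd (snd p))$(snd (snd q)))) * X (fst q) (fst (snd q)) (snd (snd q)))"
    by (simp add: sum_distrib_right)
  also have "\<dots> = (\<Sum>q\<in>UNIV. (A' ** A)$i$(fst q) * (B' ** B)$j$(fst (snd q)) * (C' ** C)$k$(snd (snd q)) * X (fst q) (fst (snd q)) (snd (snd q)))"
    by (intro sum.cong refl) (simp add: matrix_matrix_mult_def sum3 triple_prod)
  also have "\<dots> = tensor_act (A' ** A) (B' ** B) (C' ** C) X i j k"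
    by (simp add: act_alt)
  finally show "tensor_act A' B' C' (tensor_act A B C X) i j k = tensor_act (A' ** A) (B' ** B) (C' ** C) X i j k" .
qed

lemma act_id: "tensor_act (mat 1) (mat 1) (mat 1) X = X"
proof (intro ext)
  fix i j k
  have "tensor_act (mat 1) (mat 1) (mat 1) X i j k = (\<Sum>p\<in>UNIV. if p = (i,j,k) then X i j k else 0)"
    unfolding act_alt by (intro sum.cong) (auto simp: mat_def)
  then show "tensor_act (mat 1) (mat 1) (mat 1) X i j k = X i j k" by simp
qed

lemma rank_act_eq:
  assumes "invertible A" "invertible B" "invertible C"
  shows "tensor_rank (tensor_act A B C X) = tensor_rank X"
proof -
  obtain A' B' C' where "A' ** A = mat 1" "B' ** B = mat 1" "C' ** C = mat 1"
    using assms invertible_def by metis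
  then have "tensor_act A' B' C' (tensor_act A B C X) = X" by (simp add: act_comp act_id)
  then have "tensor_rank X \<le> tensor_rank (tensor_act A B C X)" by (metis rank_act_le)
  then show ?thesis using rank_act_le by (metis antisym)
qed


lemma rank_lower:
  fixes a :: "complex^2" and b :: "complex^3" and c :: "complex^6"
  assumes nz: "1 - t * g26 a b c \<noteq> 0"
  shows "6 \<le> tensor_rank (\<lambda>i j k. T26 i j k - t * outer a b c i j k)"
proof -
  define X where "X = (\<lambda>i j k. T26 i j k - t * outer a b c i j k)"
  define r where "r = tensor_rank X"
  obtain a' b' c' where dec: "X = (\<lambda>i j k. \<Sum>l<r. outer (a' l) (b' l) (c' l) i j k)"
    using rank_exists unfolding r_def by blast
  define v where "v i j = (\<chi> k. X i j k)" for i j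
  have v_eq: "v i j = axis (enc i j) 1 - (t * a$i * b$j) *s c" for i j
    by (auto simp: v_def X_def T26_eq outer_def vec_eq_iff axis_def mult.assoc)
  have v_in: "v i j \<in> vec.span (c' ` {..<r})" for i j
  proof -
    have "v i j = (\<Sum>l<r. (a' l $ i * b' l $ j) *s c' l)"
      unfolding v_def by (subst dec) (simp add: vec_eq_iff outer_def mult.assoc)
    moreover have "(\<Sum>l<r. (a' l $ i * b' l $ j) *s c' l) \<in> vec.span (c' ` {..<r})"
      by (intro vec.span_sum vec.span_scale vec.span_base) auto
    ultimately show ?thesis by simp
  qed
  let ?V = "range (\<lambda>p. v (fst p) (snd p))"
  have vV: "v i j \<in> vec.span ?V" for i j
    by (rule vec.span_base) (metis (mono_tags) fst_conv rangeI snd_conv)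
  have comp: "(\<Sum>i\<in>UNIV. \<Sum>j\<in>UNIV. c$(enc i j) *s v i j) $ k = ((1 - t * g26 a b c) *s c)$k" for k
  proof -
    have "(\<Sum>i\<in>UNIV. \<Sum>j\<in>UNIV. c$(enc i j) *s v i j) $ k = (\<Sum>i\<in>UNIV. \<Sum>j\<in>UNIV.
       (if k = enc i j then c$(enc i j) else 0) - (t * c$k) * (a$i * c$(enc i j) * b$j))"
      unfolding sum_component by (intro sum.cong refl) (auto simp: v_eq axis_def algebra_simps)
    also have "\<dots> = (\<Sum>i\<in>UNIV. \<Sum>j\<in>UNIV. (if k = enc i j then c$(enc i j) else 0))
       - (t * c$k) * (\<Sum>i\<in>UNIV. \<Sum>j\<in>UNIV. a$i * c$(enc i j) * b$j)"
      by (simp only: sum_subtractf sum_distrib_left)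
    also have "\<dots> = (1 - t * g26 a b c) * c$k"
      by (simp only: enc_sum g26_eq[symmetric]) (simp add: algebra_simps)
    also have "\<dots> = ((1 - t * g26 a b c) *s c)$k" by (simp only: vector_smult_component)
    finally show ?thesis .
  qed
  have "(\<Sum>i\<in>UNIV. \<Sum>j\<in>UNIV. c$(enc i j) *s v i j) = (1 - t * g26 a b c) *s c"
    using comp by (simp only: vec_eq_iff) blast
  then have "c = (1 / (1 - t * g26 a b c)) *s (\<Sum>i\<in>UNIV. \<Sum>j\<in>UNIV. c$(enc i j) *s v i j)"
  proof -
    have "c = (1 / (1 - t * g26 a b c)) *s ((1 - t * g26 a b c) *s c)"
      using nz by (simp only: vector_smult_assoc) simp
    then show ?thesis using \<open>(\<Sum>i\<in>UNIV. \<Sum>j\<in>UNIV. c$(enc i j) *s v i j) = (1 - t * g26 a b c) *s c\<close> by simp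
  qed
  moreover have "(1 / (1 - t * g26 a b c)) *s (\<Sum>i\<in>UNIV. \<Sum>j\<in>UNIV. c$(enc i j) *s v i j) \<in> vec.span ?V"
    by (intro vec.span_scale vec.span_sum vV)
  ultimately have c_in: "c \<in> vec.span ?V" by simp
  have ax: "axis k 1 \<in> vec.span ?V" for k
  proof -
    obtain i j where k: "k = enc i j" using enc_surj by blast
    have "axis k 1 = v i j + (t * a$i * b$j) *s c" by (simp add: v_eq k)
    moreover have "v i j + (t * a$i * b$j) *s c \<in> vec.span ?V"
      by (intro vec.span_add vec.span_scale vV c_in)
    ultimately show ?thesis by simp
  qed
  have "x \<in> vec.span ?V" for x :: "complex^6"
  proof -
    have "x = (\<Sum>k\<in>UNIV. x$k *s axis k 1)" by (simp add: basis_expansion)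
    moreover have "(\<Sum>k\<in>UNIV. x$k *s axis k 1) \<in> vec.span ?V"
      by (intro vec.span_scale vec.span_sum ax)
    ultimately show ?thesis by simp
  qed
  then have "UNIV \<subseteq> vec.span ?V" by blast
  also have "vec.span ?V \<subseteq> vec.span (c' ` {..<r})"
    using v_in by (intro vec.span_minimal vec.subspace_span) auto
  finally have "vec.dim (UNIV :: (complex^6) set) \<le> card (c' ` {..<r})"
    by (intro vec.dim_le_card) auto
  also have "\<dots> \<le> r" using card_image_le[of "{..<r}" c'] by simp
  finally show ?thesis unfolding r_def X_def vec_dim_card by simp
qed



definition bil :: "complex^6 \<Rightarrow> complex^2 \<Rightarrow> complex^3 \<Rightarrow> complex" where
  "bil c u w = (\<Sum>i\<in>UNIV. \<Sum>j\<in>UNIV. u$i * c$(enc i j) * w$j)"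

definition om :: "complex^'a::finite \<Rightarrow> complex^'b::finite \<Rightarrow> complex^('a\<times>'b)" where
  "om u w = (\<chi> p. u$(fst p) * w$(snd p))"

definition phi :: "complex^6 \<Rightarrow> complex^(2\<times>3) \<Rightarrow> complex" where
  "phi c M = (\<Sum>i\<in>UNIV. \<Sum>j\<in>UNIV. c$(enc i j) * M$(i,j))"

lemma bil_add1: "bil c (u + u') w = bil c u w + bil c u' w"
  by (simp add: bil_def distrib_right sum.distrib)
lemma bil_diff1: "bil c (u - u') w = bil c u w - bil c u' w"
  by (simp add: bil_def left_diff_distrib sum_subtractf)
lemma bil_scale1: "bil c (s *s u) w = s * bil c u w"
  by (simp add: bil_def sum_distrib_left mult.assoc)
lemma bil_add2: "bil c u (w + w') = bil c u w + bil c u w'"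
  by (simp add: bil_def distrib_left sum.distrib)
lemma bil_diff2: "bil c u (w - w') = bil c u w - bil c u w'"
  by (simp add: bil_def right_diff_distrib sum_subtractf)
lemma bil_scale2: "bil c u (s *s w) = s * bil c u w"
  by (simp add: bil_def sum_distrib_left mult_ac)
lemma bil_axis: "bil c (axis i 1) (axis j 1) = c$(enc i j)"
  unfolding bil_def s2 s3 using c2[of i] c3[of j] by (elim disjE) (simp_all add: axis_def encv)

lemma phi_om: "phi c (om u w) = bil c u w"
  by (simp add: phi_def om_def bil_def mult_ac)
lemma phi_add: "phi c (M + N) = phi c M + phi c N"
  by (simp add: phi_def distrib_left sum.distrib)
lemma phi_scale: "phi c (s *s M) = s * phi c M"
  by (simp add: phi_def sum_distrib_left mult_ac)
lemma phi_zero: "phi c 0 = 0"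
  by (simp add: phi_def)

lemma subspace_H: "vec.subspace {M. phi c M = 0}"
  unfolding vec.subspace_def by (simp add: phi_add phi_scale phi_zero)

lemma g26_bil: "g26 a b c = bil c a b"
  by (simp only: g26_eq bil_def)

lemma sum_pairs: "(\<Sum>p\<in>(UNIV::('a::finite\<times>'b::finite) set). f p) = (\<Sum>x\<in>UNIV. \<Sum>y\<in>UNIV. f (x,y))"
  by (simp add: UNIV_Times_UNIV[symmetric] sum.cartesian_product' del: UNIV_Times_UNIV)

lemma phi_pairs: "phi c M = (\<Sum>p\<in>UNIV. c$(enc (fst p) (snd p)) * M$p)"
  by (simp add: phi_def sum_pairs)

lemma alg:
  fixes g :: complex
  assumes "g \<noteq> 0"
  shows "d1 * d2 - G / g * (A * B) =
    (d1 - \<rho> / g * A + A) * (d2 - \<sigma> / g * B + - (G - \<rho> * \<sigma> / g) / g * B)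
    + (\<sigma> / g - - (G - \<rho> * \<sigma> / g) / g) * ((d1 - \<rho> / g * A) * B)
    + (\<rho> / g - 1) * (A * (d2 - \<sigma> / g * B))"
  using assms by (simp add: field_simps)

lemma rank_upper:
  fixes a :: "complex^2" and b :: "complex^3" and c :: "complex^6"
  assumes g0: "g26 a b c \<noteq> 0"
  shows "tensor_rank (\<lambda>i j k. T26 i j k - (1 / g26 a b c) * outer a b c i j k) \<le> 5"
proof -
  define g where "g = bil c a b"
  have gg: "g26 a b c = g" by (simp add: g_def g26_bil)
  have gnz: "g \<noteq> 0" using g0 gg by simp
  define \<rho> where "\<rho> i = bil c (axis i 1) b" for i
  define \<sigma> where "\<sigma> j = bil c a (axis j 1)" for j
  define x where "x i = axis i 1 - (\<rho> i / g) *s a" for i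
  define y where "y j = axis j 1 - (\<sigma> j / g) *s b" for j
  define tt where "tt i j = - bil c (x i) (y j) / g" for i j
  define W where "W i j = om (x i + a) (y j + tt i j *s b)" for i j
  define S where "S = range (\<lambda>p. W (fst p) (snd p)) \<union> range (\<lambda>i. om (x i) b) \<union> range (\<lambda>j. om a (y j))"
  define H where "H = {M. phi c M = 0}"
  have finS: "finite S" unfolding S_def by simp
  have bxb: "bil c (x i) b = 0" for i
    using gnz by (simp add: x_def bil_diff1 bil_scale1 \<rho>_def g_def[symmetric])
  have bay: "bil c a (y j) = 0" for j
    using gnz by (simp add: y_def bil_diff2 bil_scale2 \<sigma>_def g_def[symmetric])
  have bxy: "bil c (x i) (y j) = c$(enc i j) - \<rho> i * \<sigma> j / g" for i j
  proof -
    have "bil c (x i) (y j) = bil c (axis i 1) (axis j 1) - (\<sigma> j / g) * bil c (axis i 1) b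
        - (\<rho> i / g) * (bil c a (axis j 1) - (\<sigma> j / g) * bil c a b)"
      by (simp add: x_def y_def bil_diff1 bil_diff2 bil_scale1 bil_scale2 algebra_simps)
    also have "\<dots> = c$(enc i j) - (\<sigma> j / g) * \<rho> i - (\<rho> i / g) * (\<sigma> j - (\<sigma> j / g) * g)"
      by (simp only: bil_axis \<rho>_def[symmetric] \<sigma>_def[symmetric] g_def[symmetric])
    also have "\<dots> = c$(enc i j) - \<rho> i * \<sigma> j / g"
      using gnz by (simp add: field_simps)
    finally show ?thesis .
  qed
  have S_H: "S \<subseteq> H"
  proof -
    have "bil c (x i + a) (y j + tt i j *s b) = bil c (x i) (y j) + tt i j * bil c (x i) b + bil c a (y j) + tt i j * g" for i j
      by (simp add: bil_add1 bil_add2 bil_scale2 g_def algebra_simps)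
    then have "bil c (x i + a) (y j + tt i j *s b) = 0" for i j
      using gnz by (simp add: bxb bay tt_def)
    then show ?thesis unfolding S_def H_def W_def by (auto simp: phi_om bxb bay)
  qed
  have abH: "om a b \<notin> H" using gnz by (simp add: H_def phi_om g_def)
  have spanS_H: "vec.span S \<subseteq> H"
    using S_H subspace_H unfolding H_def by (intro vec.span_minimal) auto
  have "vec.span S \<subset> vec.span UNIV"
    using spanS_H abH by auto
  then have "vec.dim S < vec.dim (UNIV :: (complex^(2\<times>3)) set)"
    by (rule vec.dim_psubset)
  then have dimS: "vec.dim S \<le> 5" unfolding vec_dim_card by simp
  obtain B where B: "B \<subseteq> S" "vec.independent B" "S \<subseteq> vec.span B" "card B = vec.dim S"
    using vec.basis_exists by blast
  have finB: "finite B" using B(1) finS finite_subset by blast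
  define Pm where "Pm i j = om (axis i 1) (axis j 1) - (c$(enc i j) / g) *s om a b" for i j
  have Pm_eq: "Pm i j = W i j + (\<sigma> j / g - tt i j) *s om (x i) b + (\<rho> i / g - 1) *s om a (y j)" for i j
    unfolding vec_eq_iff
  proof
    fix q :: "2 \<times> 3"
    show "Pm i j $ q = (W i j + (\<sigma> j / g - tt i j) *s om (x i) b + (\<rho> i / g - 1) *s om a (y j)) $ q"
      unfolding Pm_def W_def tt_def bxy
      unfolding x_def y_def om_def
      apply (simp only: vec_lambda_beta vector_add_component vector_minus_component vector_smult_component)
      by (rule alg[OF gnz])
  qed
  have Pm_in: "Pm i j \<in> vec.span S" for i j
  proof -
    have "W i j \<in> S" unfolding S_def by (rule UnI1, rule UnI1, rule image_eqI[of _ _ "(i,j)"]) auto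
    moreover have "om (x i) b \<in> S" unfolding S_def by (rule UnI1, rule UnI2) auto
    moreover have "om a (y j) \<in> S" unfolding S_def by (rule UnI2) auto
    ultimately have "W i j \<in> S" "om (x i) b \<in> S" "om a (y j) \<in> S" by auto
    then show ?thesis unfolding Pm_eq
      by (intro vec.span_add vec.span_scale vec.span_base)
  qed
  have H_span: "M \<in> vec.span S" if M: "M \<in> H" for M
  proof -
    have "M = (\<Sum>p\<in>UNIV. M$p *s Pm (fst p) (snd p))"
      unfolding vec_eq_iff
    proof
      fix q :: "2 \<times> 3"
      have "(\<Sum>p\<in>UNIV. M$p *s Pm (fst p) (snd p)) $ q
          = (\<Sum>p\<in>UNIV. M$p * (om (axis (fst p) 1) (axis (snd p) 1))$q) - (\<Sum>p\<in>UNIV. M$p * ((c$(enc (fst p) (snd p)) / g) * (om a b)$q))"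
        by (simp add: Pm_def right_diff_distrib sum_subtractf mult.assoc)
      also have "\<dots> = (\<Sum>p\<in>UNIV. (if p = q then M$q else 0)) - (phi c M / g) * (om a b)$q"
      proof -
        have "(\<Sum>p\<in>UNIV. M$p * (om (axis (fst p) 1) (axis (snd p) 1))$q) = (\<Sum>p\<in>UNIV. (if p = q then M$q else 0))"
          by (intro sum.cong refl) (auto simp: om_def axis_def prod_eq_iff)
        moreover have "(\<Sum>p\<in>UNIV. M$p * ((c$(enc (fst p) (snd p)) / g) * (om a b)$q)) = (phi c M / g) * (om a b)$q"
        proof -
          have "(\<Sum>p\<in>UNIV. M$p * ((c$(enc (fst p) (snd p)) / g) * (om a b)$q))
             = (\<Sum>p\<in>UNIV. (c$(enc (fst p) (snd p)) * M$p) * ((om a b)$q / g))"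
            by (intro sum.cong refl) (simp add: field_simps)
          also have "\<dots> = (\<Sum>p\<in>UNIV. c$(enc (fst p) (snd p)) * M$p) * ((om a b)$q / g)"
            by (simp only: sum_distrib_right)
          also have "\<dots> = (phi c M / g) * (om a b)$q" by (simp add: phi_pairs)
          finally show ?thesis .
        qed
        ultimately show ?thesis by simp
      qed
      also have "\<dots> = M$q" using M by (simp add: H_def)
      finally show "M $ q = (\<Sum>p\<in>UNIV. M$p *s Pm (fst p) (snd p)) $ q" by simp
    qed
    moreover have "(\<Sum>p\<in>UNIV. M$p *s Pm (fst p) (snd p)) \<in> vec.span S"
      by (intro vec.span_sum vec.span_scale Pm_in)
    ultimately show ?thesis by simp
  qed
  define X where "X = (\<lambda>i j k. T26 i j k - (1 / g26 a b c) * outer a b c i j k)"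
  define N where "N k = (\<chi> p. X (fst p) (snd p) k)" for k
  have N_H: "N k \<in> H" for k
  proof -
    have "phi c (N k) = (\<Sum>i\<in>UNIV. \<Sum>j\<in>UNIV. (if k = enc i j then c $ (enc i j) else 0)
        - (c$k / g) * (a$i * c$(enc i j) * b$j))"
      unfolding phi_def by (intro sum.cong refl) (auto simp: N_def X_def T26_eq outer_def gg field_simps)
    also have "\<dots> = (\<Sum>i\<in>UNIV. \<Sum>j\<in>UNIV. (if k = enc i j then c $ (enc i j) else 0))
        - (c$k / g) * bil c a b"
      by (simp only: sum_subtractf sum_distrib_left bil_def)
    also have "\<dots> = 0" using gnz by (simp add: enc_sum g_def[symmetric])
    finally show ?thesis by (simp add: H_def)
  qed
  have NB: "N k \<in> vec.span B" for k
  proof -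
    have "vec.span S \<subseteq> vec.span B" using B(3) by (intro vec.span_minimal vec.subspace_span)
    then show ?thesis using H_span[OF N_H] by blast
  qed
  have "\<forall>k. \<exists>u. N k = (\<Sum>v\<in>B. u v *s v)"
    using NB vec.span_finite[OF finB] by blast
  then have "\<exists>U. \<forall>k. N k = (\<Sum>v\<in>B. U k v *s v)" by (rule choice)
  then obtain U where U: "\<And>k. N k = (\<Sum>v\<in>B. U k v *s v)" by blast
  have "\<forall>m\<in>S. \<exists>uw. m = om (fst uw) (snd uw)" unfolding S_def W_def by fastforce
  then have "\<exists>uw. \<forall>m\<in>S. m = om (fst (uw m)) (snd (uw m))" by (rule bchoice)
  then obtain uw where uw: "\<And>m. m \<in> S \<Longrightarrow> m = om (fst (uw m)) (snd (uw m))" by blast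
  have "X = (\<lambda>i j k. \<Sum>m\<in>B. outer (fst (uw m)) (snd (uw m)) (\<chi> k. U k m) i j k)"
  proof (intro ext)
    fix i j k
    have "X i j k = N k $ (i,j)" by (simp add: N_def)
    also have "\<dots> = (\<Sum>m\<in>B. U k m * m $ (i,j))" by (simp add: U)
    also have "\<dots> = (\<Sum>m\<in>B. outer (fst (uw m)) (snd (uw m)) (\<chi> k. U k m) i j k)"
    proof (intro sum.cong refl)
      fix m assume "m \<in> B"
      define u where "u = fst (uw m)"
      define w where "w = snd (uw m)"
      have m: "m = om u w" using uw B(1) \<open>m \<in> B\<close> unfolding u_def w_def by blast
      have "m $ (i,j) = u$i * w$j" using m by (simp add: om_def)
      then show "U k m * m $ (i,j) = outer (fst (uw m)) (snd (uw m)) (\<chi> k. U k m) i j k"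
        unfolding u_def[symmetric] w_def[symmetric] by (simp add: outer_def mult_ac)
    qed
    finally show "X i j k = (\<Sum>m\<in>B. outer (fst (uw m)) (snd (uw m)) (\<chi> k. U k m) i j k)" .
  qed
  then have "tensor_rank X \<le> card B" using rank_le_sum[OF finB] by simp
  then show ?thesis using B(4) dimS unfolding X_def by simp
qed


theorem proposition6p16:
  fixes T :: "(2,3,6) tensor"
    and A :: "complex^2^2" and B :: "complex^3^3" and C :: "complex^6^6"
    and a :: "complex^2" and b :: "complex^3" and c :: "complex^6"
  assumes "invertible A" and "invertible B" and "invertible C"
    and "tensor_act A B C T = T26"
    and "a \<noteq> 0" and "b \<noteq> 0" and "c \<noteq> 0"
  shows "outer a b c \<in> forbidden_locus T \<longleftrightarrow> g26 (A *v a) (B *v b) (C *v c) = 0"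
proof -
  define a' where "a' = A *v a"
  define b' where "b' = B *v b"
  define c' where "c' = C *v c"
  have act_diff: "tensor_act A B C (\<lambda>i j k. T i j k - t * outer a b c i j k)
      = (\<lambda>i j k. T26 i j k - t * outer a' b' c' i j k)" for t
    by (simp add: act_lin act_outer assms(4) a'_def b'_def c'_def)
  have rk: "tensor_rank (\<lambda>i j k. T i j k - t * outer a b c i j k)
      = tensor_rank (\<lambda>i j k. T26 i j k - t * outer a' b' c' i j k)" for t
    using rank_act_eq[OF assms(1-3), of "\<lambda>i j k. T i j k - t * outer a b c i j k"] act_diff[of t]
    by simp
  have rT: "tensor_rank T = tensor_rank T26"
    using rank_act_eq[OF assms(1-3), of T] assms(4) by simp
  have T26sum: "T26 = (\<lambda>i j k. \<Sum>p\<in>(UNIV::(2\<times>3) set).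
      outer (axis (fst p) 1) (axis (snd p) 1) (axis (enc (fst p) (snd p)) 1) i j k)"
  proof (intro ext)
    fix i j k
    have "(\<Sum>p\<in>(UNIV::(2\<times>3) set).
      outer (axis (fst p) 1) (axis (snd p) 1) (axis (enc (fst p) (snd p)) 1) i j k)
      = (\<Sum>p\<in>(UNIV::(2\<times>3) set). if p = (i,j) then (if k = enc i j then 1 else 0) else 0)"
      by (intro sum.cong refl) (auto simp: outer_def axis_def prod_eq_iff)
    also have "\<dots> = T26 i j k" by (simp add: T26_eq)
    finally show "T26 i j k = (\<Sum>p\<in>(UNIV::(2\<times>3) set).
      outer (axis (fst p) 1) (axis (snd p) 1) (axis (enc (fst p) (snd p)) 1) i j k)" by simp
  qed
  have "tensor_rank T26 \<le> card (UNIV::(2\<times>3) set)"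
    by (subst T26sum, rule rank_le_sum) simp
  then have le6: "tensor_rank T26 \<le> 6" by simp
  have "6 \<le> tensor_rank (\<lambda>i j k. T26 i j k - 0 * outer a' b' c' i j k)"
    by (rule rank_lower) simp
  then have ge6: "6 \<le> tensor_rank T26" by simp
  have rT6: "tensor_rank T = 6" using rT le6 ge6 by simp
  have "outer a b c \<in> forbidden_locus T \<longleftrightarrow> g26 a' b' c' = 0"
  proof
    assume F: "outer a b c \<in> forbidden_locus T"
    show "g26 a' b' c' = 0"
    proof (rule ccontr)
      assume g: "g26 a' b' c' \<noteq> 0"
      have "tensor_rank (\<lambda>i j k. T i j k - (1 / g26 a' b' c') * outer a b c i j k) \<ge> tensor_rank T"
        using F unfolding forbidden_locus_def by blast
      then have "6 \<le> tensor_rank (\<lambda>i j k. T26 i j k - (1 / g26 a' b' c') * outer a' b' c' i j k)"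
        unfolding rk rT6 .
      moreover have "tensor_rank (\<lambda>i j k. T26 i j k - (1 / g26 a' b' c') * outer a' b' c' i j k) \<le> 5"
        by (rule rank_upper[OF g])
      ultimately show False by simp
    qed
  next
    assume g: "g26 a' b' c' = 0"
    show "outer a b c \<in> forbidden_locus T"
      unfolding forbidden_locus_def
    proof (intro CollectI allI)
      fix t :: complex
      have "6 \<le> tensor_rank (\<lambda>i j k. T26 i j k - t * outer a' b' c' i j k)"
        by (rule rank_lower) (simp add: g)
      then show "tensor_rank T \<le> tensor_rank (\<lambda>i j k. T i j k - t * outer a b c i j k)"
        unfolding rk rT6 .
    qed
  qed
  then show ?thesis by (simp add: a'_def b'_def c'_def)
qed

end
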